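(* Let $m\ge2$ and let $V\subseteq k[\beta]$ be a $k$-subspace with $(\beta^m)\subseteq V$. Let $(p_i)_{i\ge1}$ be a $k$-basis of $V$ whose orders $\nu_i=\mathrm{ord}\,p_i$ satisfy $0\le\nu_1<\nu_2<\cdots$. Then $$\dim_k\mathcal D'_m(V)\ge 2m-\max(1,\nu_1,m-\nu_2+1)-\max(1,m-\nu_1).$$ In particular, $\mathcal D'_m(V)=0$ implies $\nu_1=0$ and $\nu_2=1$.
   Context: $k$ is a field; the order $\mathrm{ord}\,p$ of a nonzero polynomial $p\in k[\beta]$ is the smallest exponent of $\beta$ with nonzero coefficient. A first order differential operator $A+B\frac{d}{d\beta}$ ($A,B\in k[\beta]$) acts by $v\mapsto Av+Bv'$. $\mathcal D'_m(V)$ is the quotient of the Lie algebra $\{\Theta=A+B\frac{d}{d\beta}: A,B\in k[\beta],\ B(0)=0,\ \Theta(V)\subseteq V\}$ by $\{A+B\frac{d}{d\beta}: A\in k+(\beta^m),\ B\in(\beta^m)\}$. (For $\Lambda=kQ/I(n;n',n'';V)$ with $m=\min(n',n'')$, this is the Lie algebra $\mathcal D'(\Lambda)$, and $\dim\mathrm{HH}^1(\Lambda)=\dim\mathcal D'(\Lambda)+n-m+c$.) *)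

theory Defs
  imports "HOL-Computational_Algebra.Polynomial" "HOL-Library.Extended_Nat"
begin

text \<open>The variable beta is the polynomial [:0,1:].\<close>

definition ord :: "'a::zero poly \<Rightarrow> nat" where
  "ord p = (LEAST i. coeff p i \<noteq> 0)"

definition beta_ideal :: "nat \<Rightarrow> 'a::field poly set" where
  "beta_ideal m = {p. [:0, 1:] ^ m dvd p}"

definition poly_subspace :: "'a::field poly set \<Rightarrow> bool" where
  "poly_subspace V \<longleftrightarrow> 0 \<in> V \<and> (\<forall>x\<in>V. \<forall>y\<in>V. x + y \<in> V)
     \<and> (\<forall>c. \<forall>x\<in>V. smult c x \<in> V)"

definition is_basis_from1 :: "(nat \<Rightarrow> 'a::field poly) \<Rightarrow> 'a poly set \<Rightarrow> bool" where
  "is_basis_from1 p V \<longleftrightarrow>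
     (\<forall>i\<ge>1. p i \<in> V) \<and>
     (\<forall>F c. finite F \<longrightarrow> F \<subseteq> {1..} \<longrightarrow> (\<Sum>i\<in>F. smult (c i) (p i)) = 0 \<longrightarrow> (\<forall>i\<in>F. c i = 0)) \<and>
     (\<forall>v\<in>V. \<exists>F c. finite F \<and> F \<subseteq> {1..} \<and> v = (\<Sum>i\<in>F. smult (c i) (p i)))"

definition diff_op :: "'a::field poly \<Rightarrow> 'a poly \<Rightarrow> 'a poly \<Rightarrow> 'a poly" where
  "diff_op A B = (\<lambda>v. A * v + B * pderiv v)"

definition D_ops :: "'a::field poly set \<Rightarrow> ('a poly \<Rightarrow> 'a poly) set" where
  "D_ops V = {diff_op A B | A B. poly B 0 = 0 \<and> diff_op A B ` V \<subseteq> V}"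

definition N_ops :: "nat \<Rightarrow> ('a::field poly \<Rightarrow> 'a poly) set" where
  "N_ops m = {diff_op A B | A B. (\<exists>c. A - [:c:] \<in> beta_ideal m) \<and> B \<in> beta_ideal m}"

definition indep_mod :: "('a::field poly \<Rightarrow> 'a poly) set \<Rightarrow> ('a poly \<Rightarrow> 'a poly) set
    \<Rightarrow> (nat \<Rightarrow> 'a poly \<Rightarrow> 'a poly) \<Rightarrow> nat \<Rightarrow> bool" where
  "indep_mod L N T n \<longleftrightarrow> (\<forall>i<n. T i \<in> L) \<and>
     (\<forall>c. (\<lambda>v. \<Sum>i<n. smult (c i) (T i v)) \<in> N \<longrightarrow> (\<forall>i<n. c i = 0))"

text \<open>Dimension of the quotient L/N (possibly infinite): supremum of the sizes of
  families in L linearly independent modulo N.\<close>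
definition quot_dim :: "('a::field poly \<Rightarrow> 'a poly) set \<Rightarrow> ('a poly \<Rightarrow> 'a poly) set \<Rightarrow> enat" where
  "quot_dim L N = (SUP n \<in> {n. \<exists>T. indep_mod L N T n}. enat n)"

definition dim_Dprime :: "nat \<Rightarrow> 'a::field poly set \<Rightarrow> enat" where
  "dim_Dprime m V = quot_dim (D_ops V) (N_ops m)"

end

theory Submission
  imports Defs
begin

lemma sum_split_add: "(\<Sum>k<n1+n2. f k) = (\<Sum>k<n1. f k) + (\<Sum>i<n2. f (n1+i))"
  for f :: "nat \<Rightarrow> 'b::comm_monoid_add"
  by (induction n2) (simp_all add: add.assoc)

lemma X_pow: "([:0,1:] :: 'a::comm_semiring_1 poly) ^ m = monom 1 m"
  by (simp add: monom_altdef)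

lemma bi_iff: "(q::'a::field poly) \<in> beta_ideal m \<longleftrightarrow> (\<forall>k<m. coeff q k = 0)"
  by (simp add: beta_ideal_def X_pow monom_1_dvd_iff')

lemma ord_coeff: assumes "(q::'a::zero poly) \<noteq> 0"
  shows "coeff q (ord q) \<noteq> 0" "k < ord q \<Longrightarrow> coeff q k = 0"
proof -
  from assms obtain i where "coeff q i \<noteq> 0" by (meson leading_coeff_neq_0)
  then show "coeff q (ord q) \<noteq> 0" unfolding ord_def by (rule LeastI)
  show "k < ord q \<Longrightarrow> coeff q k = 0" unfolding ord_def using not_less_Least by blast
qed

lemma ord_dvd: assumes "(q::'a::field poly) \<noteq> 0" shows "monom 1 (ord q) dvd q"
  using ord_coeff(2)[OF assms] by (simp add: monom_1_dvd_iff')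

lemma mdvd_mult: "monom 1 a dvd (f::'a::field poly) \<Longrightarrow> monom 1 b dvd g \<Longrightarrow> monom 1 (a+b) dvd f*g"
proof -
  assume "monom 1 a dvd f" "monom 1 b dvd g"
  then have "monom 1 a * monom 1 b dvd f * g" by (rule mult_dvd_mono)
  then show ?thesis by (simp add: mult_monom)
qed

lemma mdvd_pderiv: "monom 1 a dvd (f::'a::field poly) \<Longrightarrow> monom 1 (a-1) dvd pderiv f"
  by (simp add: monom_1_dvd_iff' coeff_pderiv)

lemma mdvd_le: "monom 1 a dvd (f::'a::field poly) \<Longrightarrow> b \<le> a \<Longrightarrow> monom 1 b dvd f"
  by (simp add: monom_1_dvd_iff')

lemma mdvd_bi: "monom 1 a dvd (f::'a::field poly) \<Longrightarrow> m \<le> a \<Longrightarrow> f \<in> beta_ideal m"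
  by (simp add: monom_1_dvd_iff' bi_iff)

lemma diff_op_lin: "finite F \<Longrightarrow> diff_op A B (\<Sum>i\<in>F. smult (c i) (q i)) = (\<Sum>i\<in>F. smult (c i) (diff_op A B (q i)))"
  by (induction F rule: finite_induct) (simp_all add: diff_op_def pderiv_add pderiv_smult distrib_left add_ac smult_add_right)

lemma V_sum: assumes "poly_subspace V" "finite F" "\<forall>i\<in>F. q i \<in> V" shows "(\<Sum>i\<in>F. smult (c i) (q i)) \<in> V"
  using assms(2,3) by (induction F rule: finite_induct) (use assms(1) in \<open>simp_all add: poly_subspace_def\<close>)

lemma basis_span: assumes "is_basis_from1 p V" "v \<in> V"
  shows "\<exists>F c. finite F \<and> F \<subseteq> {1..} \<and> v = (\<Sum>i\<in>F. smult (c i) (p i))"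
  using conjunct2[OF conjunct2[OF assms(1)[unfolded is_basis_from1_def]]] assms(2) by (rule bspec)

lemma basis_indep: assumes "is_basis_from1 p V"
  shows "\<forall>F c. finite F \<longrightarrow> F \<subseteq> {1..} \<longrightarrow> (\<Sum>i\<in>F. smult (c i) (p i)) = 0 \<longrightarrow> (\<forall>i\<in>F. c i = 0)"
  using conjunct1[OF conjunct2[OF assms(1)[unfolded is_basis_from1_def]]] .

lemma basis_mem: assumes "is_basis_from1 p V" "i \<ge> 1" shows "p i \<in> V"
  using conjunct1[OF assms(1)[unfolded is_basis_from1_def]] assms(2) by simp

lemma preserve: assumes "poly_subspace V" "is_basis_from1 p V" "\<And>i. i \<ge> 1 \<Longrightarrow> diff_op A B (p i) \<in> V"
  shows "diff_op A B ` V \<subseteq> V"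
proof
  fix w assume "w \<in> diff_op A B ` V"
  then obtain v where v: "v \<in> V" "w = diff_op A B v" by blast
  then obtain F c where F: "finite F" "F \<subseteq> {1..}" "v = (\<Sum>i\<in>F. smult (c i) (p i))"
    using basis_span[OF assms(2) v(1)] by blast
  have "w = (\<Sum>i\<in>F. smult (c i) (diff_op A B (p i)))" using v(2) F(3) diff_op_lin[OF F(1)] by simp
  also have "\<dots> \<in> V"
  proof (rule V_sum[OF assms(1) F(1)])
    show "\<forall>i\<in>F. diff_op A B (p i) \<in> V" using F(2) assms(3) by auto
  qed
  finally show "w \<in> V" .
qed

lemma diff_op_inj: "diff_op A B = diff_op A' B' \<Longrightarrow> A = A' \<and> B = B'"
proof -
  assume h: "diff_op A B = diff_op A' B'"
  have 1: "A = A'" using fun_cong[OF h, of 1] by (simp add: diff_op_def)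
  have "A * [:0,1:] + B = A' * [:0,1:] + B'" using fun_cong[OF h, of "[:0,1:]"]
    by (simp add: diff_op_def pderiv_pCons)
  with 1 show ?thesis by simp
qed

lemma diff_op_comb: "(\<lambda>v. \<Sum>k<n. smult (c k) (diff_op (Af k) (Bf k) v)) =
   diff_op (\<Sum>k<n. smult (c k) (Af k)) (\<Sum>k<n. smult (c k) (Bf k))"
  by (rule ext) (simp add: diff_op_def sum_distrib_right smult_add_right sum.distrib)

lemma cancel_unit: assumes "coeff u 0 \<noteq> 0" "monom 1 m dvd R * (u::'a::field poly)"
  shows "monom 1 m dvd R"
proof (cases "R = 0")
  case False
  have u: "u \<noteq> 0" using assms(1) by auto
  have "order 0 u = 0" using assms(1) by (simp add: order_0I poly_0_coeff_0)
  moreover have "order 0 (R*u) = order 0 R + order 0 u" using False u by (simp add: order_mult)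
  moreover have "m \<le> order 0 (R*u)" using assms(2) False u by (simp add: monom_1_dvd_iff)
  ultimately show ?thesis using False by (simp add: monom_1_dvd_iff)
qed simp

lemma coeff_monom_sum: "j < n \<Longrightarrow> coeff (\<Sum>i<n. monom (c i) (b+i)) (b+j) = c j"
  by (simp add: coeff_sum coeff_monom)



lemma arith_a: "int (max 1 (m - v1)) = max 1 (int m - int v1)" by (cases "v1 \<le> m") (auto simp: of_nat_diff)
lemma arith_b: "int (max 1 (max v1 (m + 1 - v2))) = max 1 (max (int v1) (int m - int v2 + 1))"
  by (cases "v2 \<le> m + 1") (auto simp: of_nat_diff)
lemma arith_c: "(a::nat) \<le> m \<Longrightarrow> nat (2 * int m - int b - int a) \<le> (m - a) + (m - b)" by linarith
lemma arith_d: "m \<ge> (2::nat) \<Longrightarrow> m \<le> max 1 (m - v1) \<Longrightarrow> m \<le> max 1 (max v1 (m + 1 - v2)) \<Longrightarrow> v1 < v2 \<Longrightarrow> v1 = 0 \<and> v2 = 1"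
  by (auto simp: max_def split: if_splits)

theorem mainTheorem16:
  fixes m :: nat and V :: "'a::field poly set" and p :: "nat \<Rightarrow> 'a poly"
  assumes "m \<ge> 2"
    and "poly_subspace V"
    and "beta_ideal m \<subseteq> V"
    and "is_basis_from1 p V"
    and "\<And>i j. 1 \<le> i \<Longrightarrow> i < j \<Longrightarrow> ord (p i) < ord (p j)"
  shows "enat (nat (2 * int m - max 1 (max (int (ord (p 1))) (int m - int (ord (p 2)) + 1))
                 - max 1 (int m - int (ord (p 1))))) \<le> dim_Dprime m V
         \<and> (dim_Dprime m V = 0 \<longrightarrow> ord (p 1) = 0 \<and> ord (p 2) = 1)"
proof -
  define \<nu>1 where "\<nu>1 = ord (p 1)"
  define \<nu>2 where "\<nu>2 = ord (p 2)"
  have pnz: "p i \<noteq> 0" if "i \<ge> 1" for i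
  proof
    assume h: "p i = 0"
    have ind: "\<forall>F c. finite F \<longrightarrow> F \<subseteq> {1..} \<longrightarrow> (\<Sum>i\<in>F. smult (c i) (p i)) = 0 \<longrightarrow> (\<forall>i\<in>F. c i = 0)"
      by (rule basis_indep[OF assms(4)])
    have "(1::'a) = 0"
      using ind[rule_format, of "{i}" "\<lambda>_. 1" i] h that by simp
    then show False by simp
  qed
  have pV: "p i \<in> V" if "i \<ge> 1" for i using basis_mem[OF assms(4) that] .
  have d1: "monom 1 \<nu>1 dvd p i" if "i \<ge> 1" for i
  proof -
    have "\<nu>1 \<le> ord (p i)" unfolding \<nu>1_def using assms(5)[of 1 i] that
      by (cases "i = 1") auto
    then show ?thesis using ord_dvd[OF pnz[OF that]] mdvd_le by blast
  qed
  have d2: "monom 1 \<nu>2 dvd p i" if "i \<ge> 2" for i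
  proof -
    have "\<nu>2 \<le> ord (p i)" unfolding \<nu>2_def using assms(5)[of 2 i] that
      by (cases "i = 2") auto
    moreover have "i \<ge> 1" using that by simp
    ultimately show ?thesis using ord_dvd[OF pnz[OF \<open>i \<ge> 1\<close>]] mdvd_le by blast
  qed
  have \<nu>12: "\<nu>1 < \<nu>2" unfolding \<nu>1_def \<nu>2_def using assms(5)[of 1 2] by simp
  obtain u where u: "p 1 = monom 1 \<nu>1 * u" using d1[of 1] by (auto elim: dvdE)
  have u0: "coeff u 0 \<noteq> 0"
  proof -
    have "coeff (p 1) \<nu>1 \<noteq> 0" unfolding \<nu>1_def using ord_coeff(1)[OF pnz[of 1]] by simp
    then show ?thesis using u by (simp add: coeff_monom_mult)
  qed
  define a where "a = max 1 (m - \<nu>1)"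
  define b where "b = max 1 (max \<nu>1 (m + 1 - \<nu>2))"
  define n1 where "n1 = m - a"
  define n2 where "n2 = m - b"
  define Af where "Af k = (if k < n1 then monom 1 (a+k) else - (monom 1 (b+(k-n1)-\<nu>1) * pderiv (p 1)))" for k
  define Bf where "Bf k = (if k < n1 then 0 else monom 1 (b+(k-n1)-\<nu>1) * p 1)" for k
  define T where "T k = diff_op (Af k) (Bf k)" for k
  have memb: "T k \<in> D_ops V" if "k < n1 + n2" for k
  proof (cases "k < n1")
    case True
    have "diff_op (monom 1 (a+k)) 0 ` V \<subseteq> V"
    proof (rule preserve[OF assms(2,4)])
      fix i :: nat assume "i \<ge> 1"
      have "monom 1 (a+k+\<nu>1) dvd monom 1 (a+k) * p i" using mdvd_mult[OF _ d1[OF \<open>i\<ge>1\<close>], of "a+k"] by simp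
      then have "monom 1 (a+k) * p i \<in> beta_ideal m" by (rule mdvd_bi) (simp add: a_def)
      then show "diff_op (monom 1 (a+k)) 0 (p i) \<in> V" using assms(3) by (auto simp: diff_op_def)
    qed
    moreover have "T k = diff_op (monom 1 (a+k)) 0" using True by (simp add: T_def Af_def Bf_def)
    ultimately show ?thesis unfolding D_ops_def mem_Collect_eq
      by (intro exI[of _ "monom 1 (a+k)"] exI[of _ 0]) simp
  next
    case False
    define s where "s = b+(k-n1)-\<nu>1"
    have sj: "s + \<nu>1 = b + (k - n1)" unfolding s_def b_def by simp
    have j1: "s + \<nu>1 \<ge> 1" "s + \<nu>1 + \<nu>2 \<ge> m + 1" using sj unfolding b_def by auto
    have B0: "poly (monom 1 s * p 1) 0 = 0"
    proof -
      have "monom 1 (s + \<nu>1) dvd monom 1 s * p 1" using mdvd_mult[OF _ d1, of s] by simp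
      then have "monom 1 s * p 1 \<in> beta_ideal 1" by (rule mdvd_bi) (use j1 in simp)
      then show ?thesis by (simp add: bi_iff poly_0_coeff_0)
    qed
    have "diff_op (- (monom 1 s * pderiv (p 1))) (monom 1 s * p 1) ` V \<subseteq> V"
    proof (rule preserve[OF assms(2,4)])
      fix i :: nat assume i1: "i \<ge> 1"
      have eq: "diff_op (- (monom 1 s * pderiv (p 1))) (monom 1 s * p 1) (p i)
          = monom 1 s * (p 1 * pderiv (p i)) - monom 1 s * (pderiv (p 1) * p i)"
        by (simp add: diff_op_def algebra_simps)
      show "diff_op (- (monom 1 s * pderiv (p 1))) (monom 1 s * p 1) (p i) \<in> V"
      proof (cases "i = 1")
        case True
        then show ?thesis using eq assms(2) by (simp add: mult.commute poly_subspace_def)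
      next
        case False
        then have i2: "i \<ge> 2" using i1 by simp
        have t1: "monom 1 s * (p 1 * pderiv (p i)) \<in> beta_ideal m"
        proof -
          have "monom 1 (s + (\<nu>1 + (\<nu>2 - 1))) dvd monom 1 s * (p 1 * pderiv (p i))"
            by (rule mdvd_mult[OF _ mdvd_mult[OF d1 mdvd_pderiv[OF d2[OF i2]]]]) simp_all
          then show ?thesis by (rule mdvd_bi) (use j1 \<nu>12 in simp)
        qed
        have t2: "monom 1 s * (pderiv (p 1) * p i) \<in> beta_ideal m"
        proof -
          have "monom 1 (s + ((\<nu>1 - 1) + \<nu>2)) dvd monom 1 s * (pderiv (p 1) * p i)"
            by (rule mdvd_mult[OF _ mdvd_mult[OF mdvd_pderiv[OF d1] d2[OF i2]]]) simp_all
          then show ?thesis by (rule mdvd_bi) (use j1 \<nu>12 in simp)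
        qed
        have "monom 1 s * (p 1 * pderiv (p i)) - monom 1 s * (pderiv (p 1) * p i) \<in> beta_ideal m"
          using t1 t2 by (simp add: bi_iff)
        then show ?thesis using eq assms(3) by auto
      qed
    qed
    moreover have "T k = diff_op (- (monom 1 s * pderiv (p 1))) (monom 1 s * p 1)"
      using False by (simp add: T_def Af_def Bf_def s_def)
    ultimately show ?thesis using B0 unfolding D_ops_def mem_Collect_eq
      by (intro exI[of _ "- (monom 1 s * pderiv (p 1))"] exI[of _ "monom 1 s * p 1"]) simp
  qed
  have indep: "indep_mod (D_ops V) (N_ops m) T (n1 + n2)"
    unfolding indep_mod_def
  proof (intro conjI)
    show "\<forall>i<n1 + n2. T i \<in> D_ops V" using memb by blast
  next
    show "\<forall>c. (\<lambda>v. \<Sum>i<n1 + n2. smult (c i) (T i v)) \<in> N_ops m \<longrightarrow> (\<forall>i<n1 + n2. c i = 0)"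
  proof (rule allI, rule impI)
    fix c :: "nat \<Rightarrow> 'a"
    assume "(\<lambda>v. \<Sum>i<n1 + n2. smult (c i) (T i v)) \<in> N_ops m"
    then obtain A B where AB: "(\<lambda>v. \<Sum>i<n1 + n2. smult (c i) (T i v)) = diff_op A B"
      "\<exists>c0. A - [:c0:] \<in> beta_ideal m" "B \<in> beta_ideal m"
      unfolding N_ops_def by blast
    have "diff_op (\<Sum>k<n1+n2. smult (c k) (Af k)) (\<Sum>k<n1+n2. smult (c k) (Bf k)) = diff_op A B"
      using AB(1) unfolding T_def diff_op_comb .
    then have SA: "(\<Sum>k<n1+n2. smult (c k) (Af k)) = A" and SB: "(\<Sum>k<n1+n2. smult (c k) (Bf k)) = B"
      using diff_op_inj by blast+
    define Q where "Q = (\<Sum>i<n2. monom (c (n1+i)) (b+i-\<nu>1))"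
    have "(\<Sum>k<n1+n2. smult (c k) (Bf k)) = Q * p 1"
      unfolding sum_split_add Q_def Bf_def sum_distrib_right
      by (simp add: smult_monom_mult)
    then have "monom 1 m dvd (Q * monom 1 \<nu>1) * u" using SB AB(3) u
      by (simp add: beta_ideal_def X_pow mult.assoc)
    then have "monom 1 m dvd Q * monom 1 \<nu>1" by (rule cancel_unit[OF u0])
    moreover have "Q * monom 1 \<nu>1 = (\<Sum>i<n2. monom (c (n1+i)) (b+i))"
      unfolding Q_def sum_distrib_right using b_def
      by (intro sum.cong refl) (simp add: mult_monom)
    ultimately have cB: "c (n1 + i) = 0" if "i < n2" for i
      using coeff_monom_sum[OF that, of "\<lambda>i. c (n1+i)" b] that
      by (simp add: monom_1_dvd_iff' n2_def)
    have "A = (\<Sum>k<n1. monom (c k) (a+k))"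
      unfolding SA[symmetric] sum_split_add using cB by (simp add: Af_def smult_monom)
    then have Aeq: "A = (\<Sum>k<n1. monom (c k) (a+k))" .
    obtain c0 where c0: "A - [:c0:] \<in> beta_ideal m" using AB(2) by blast
    have cA: "c k = 0" if "k < n1" for k
    proof -
      have lt: "a + k < m" using that unfolding n1_def by simp
      have ge: "a + k \<noteq> 0" unfolding a_def by simp
      have "coeff (A - [:c0:]) (a+k) = 0" using c0 lt by (simp add: bi_iff)
      moreover have "coeff A (a+k) = c k" unfolding Aeq by (rule coeff_monom_sum[OF that])
      moreover have "coeff [:c0:] (a+k) = 0" using ge by (cases "a+k") simp_all
      ultimately show ?thesis by simp
    qed
    show "\<forall>i<n1 + n2. c i = 0"
    proof (intro allI impI)
      fix i assume "i < n1 + n2"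
      then show "c i = 0" using cA cB[of "i - n1"] by (cases "i < n1") auto
    qed
  qed
  qed
  have "n1 + n2 \<in> {n. \<exists>T. indep_mod (D_ops V) (N_ops m) T n}" using indep by blast
  then have dimge: "enat (n1 + n2) \<le> dim_Dprime m V"
    unfolding dim_Dprime_def quot_dim_def by (rule SUP_upper)
  have am: "a \<le> m" unfolding a_def using assms(1) by simp
  have "nat (2 * int m - int b - int a) \<le> n1 + n2" unfolding n1_def n2_def by (rule arith_c[OF am])
  then have "nat (2 * int m - max 1 (max (int \<nu>1) (int m - int \<nu>2 + 1)) - max 1 (int m - int \<nu>1)) \<le> n1 + n2"
    unfolding a_def b_def arith_a arith_b .
  then have part1: "enat (nat (2 * int m - max 1 (max (int (ord (p 1))) (int m - int (ord (p 2)) + 1))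
                 - max 1 (int m - int (ord (p 1))))) \<le> dim_Dprime m V"
    using dimge unfolding \<nu>1_def \<nu>2_def
    by (meson enat_ord_simps(1) order_trans)
  have part2: "ord (p 1) = 0 \<and> ord (p 2) = 1" if "dim_Dprime m V = 0"
  proof -
    have "enat (n1 + n2) \<le> 0" using dimge that by simp
    then have "n1 + n2 = 0" by (simp add: zero_enat_def)
    then have "m \<le> a" "m \<le> b" unfolding n1_def n2_def by auto
    then have "\<nu>1 = 0 \<and> \<nu>2 = 1" using arith_d[OF assms(1) _ _ \<nu>12] unfolding a_def b_def by blast
    then show ?thesis unfolding \<nu>1_def \<nu>2_def .
  qed
  show ?thesis using part1 part2 by blast
qed

end
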